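(* Let $\epsilon>0$ and let $A^\epsilon$ be an arbitrary selfadjoint operator in $\mathcal{H}$ with $\overline{W(A^\epsilon)}=[\inf W(A)-\epsilon,\sup W(A)+\epsilon]$. Define \[ T^\epsilon(\omega):=A^\epsilon-\omega^2-\frac{\omega^2}{c-id\omega-\omega^2}B,\quad \mathop{\rm dom} T^\epsilon(\omega)=\mathop{\rm dom} A^\epsilon,\quad \omega\in\mathcal{C}, \] and let $W_\Omega(T^\epsilon)$ be the enclosure of the numerical range of $T^\epsilon$ defined in the same way as $W_\Omega(T)$, i.e. with $\Omega$ replaced by $\overline{W(A^\epsilon)}\times\overline{W(B)}$. Then $\overline{W_\Omega^\epsilon(T)}\cap i\mathbb{R}=W_\Omega(T^\epsilon)\cap i\mathbb{R}$.
   Context: Let $\mathcal{H}$ be a Hilbert space, $A$ a selfadjoint operator in $\mathcal{H}$, $B$ a non-zero bounded selfadjoint operator in $\mathcal{H}$, and $c\geq 0$, $d>0$ real constants. Set $\theta:=\sqrt{c-d^2/4}$ (principal square root), $\delta_\pm:=\pm\theta-id/2$, $\mathcal{C}:=\mathbb{C}\setminus\{\delta_+,\delta_-\}$, and \[ T(\omega):=A-\omega^2-\frac{\omega^2}{c-id\omega-\omega^2}B,\quad \mathop{\rm dom} T(\omega)=\mathop{\rm dom} A,\quad \omega\in\mathcal{C}. \] $W(\cdot)$ denotes the numerical range of an operator. For $(\alpha,\beta)\in\mathbb{R}^2$ let $t_{(\alpha,\beta)}(\omega):=\alpha-\omega^2-\frac{\omega^2}{c-id\omega-\omega^2}\beta$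 and $p_{(\alpha,\beta)}(\omega):=(\alpha-\omega^2)(c-id\omega-\omega^2)-\beta\omega^2$, with roots $r_n(\alpha,\beta)$, $n=1,\dots,4$, ordered continuously in $(\alpha,\beta)$ and extended to $\alpha=\pm\infty$ by their limit values in $\overline{\mathbb{C}}=\mathbb{C}\cup\{\infty\}$. Let $\Omega:=\overline{W(A)}\times\overline{W(B)}\subset\overline{\mathbb{R}}\times\mathbb{R}$ and $W_\Omega(T):=\bigcup_{n=1}^4\bigcup_{(\alpha,\beta)\in\Omega}r_n(\alpha,\beta)$, an enclosure of the numerical range of $T$. For $\epsilon>0$ define the enclosure of the $\epsilon$-pseudonumerical range \[ W_\Omega^\epsilon(T):=W_\Omega(T)\cup\{\omega\in\mathcal{C}\setminus W_\Omega(T):\exists(\alpha,\beta)\in\Omega,\ |t_{(\alpha,\beta)}(\omega)|<\epsilon\}. \] *)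

theory Defs
  imports "HOL-Analysis.Analysis"
begin

class complex_vector = real_vector +
  fixes scaleC :: "complex \<Rightarrow> 'a \<Rightarrow> 'a"
  assumes scaleC_add_right: "scaleC a (x + y) = scaleC a x + scaleC a y"
    and scaleC_add_left: "scaleC (a + b) x = scaleC a x + scaleC b x"
    and scaleC_scaleC: "scaleC a (scaleC b x) = scaleC (a * b) x"
    and scaleC_one: "scaleC 1 x = x"
    and scaleR_scaleC: "scaleR r x = scaleC (complex_of_real r) x"

class complex_inner = complex_vector + real_normed_vector +
  fixes cinner :: "'a \<Rightarrow> 'a \<Rightarrow> complex"
  assumes cinner_conj: "cinner x y = cnj (cinner y x)"
    and cinner_add_left: "cinner (x + y) z = cinner x z + cinner y z"
    and cinner_scaleC_left: "cinner (scaleC r x) y = cnj r * cinner x y"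
    and cinner_real_nonneg: "Im (cinner x x) = 0 \<and> Re (cinner x x) \<ge> 0"
    and cinner_eq_zero_iff: "cinner x x = 0 \<longleftrightarrow> x = 0"
    and norm_eq_sqrt_cinner: "norm x = sqrt (Re (cinner x x))"

class chilbert_space = complex_inner + complete_space

definition csubspace :: "'a::complex_vector set \<Rightarrow> bool" where
  "csubspace S \<longleftrightarrow> 0 \<in> S \<and> (\<forall>x\<in>S. \<forall>y\<in>S. x + y \<in> S) \<and> (\<forall>c. \<forall>x\<in>S. scaleC c x \<in> S)"

definition clinear_on :: "'a::complex_vector set \<Rightarrow> ('a \<Rightarrow> 'a) \<Rightarrow> bool" where
  "clinear_on D A \<longleftrightarrow> csubspace D \<and>
     (\<forall>x\<in>D. \<forall>y\<in>D. A (x + y) = A x + A y) \<and> (\<forall>c. \<forall>x\<in>D. A (scaleC c x) = scaleC c (A x))"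

definition adjoint_dom :: "'a::complex_inner set \<Rightarrow> ('a \<Rightarrow> 'a) \<Rightarrow> 'a set" where
  "adjoint_dom D A = {y. \<exists>z. \<forall>x\<in>D. cinner (A x) y = cinner x z}"

text \<open>Selfadjoint: densely defined, linear, symmetric, and dom A* contained in dom A
  (hence A* = A).\<close>
definition selfadjoint :: "'a::complex_inner set \<Rightarrow> ('a \<Rightarrow> 'a) \<Rightarrow> bool" where
  "selfadjoint D A \<longleftrightarrow> clinear_on D A \<and> closure D = UNIV \<and>
     (\<forall>x\<in>D. \<forall>y\<in>D. cinner (A x) y = cinner x (A y)) \<and> adjoint_dom D A \<subseteq> D"

definition bounded_op :: "('a::complex_inner \<Rightarrow> 'a) \<Rightarrow> bool" where
  "bounded_op B \<longleftrightarrow> (\<exists>K. \<forall>x. norm (B x) \<le> K * norm x)"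

definition numrange :: "'a::complex_inner set \<Rightarrow> ('a \<Rightarrow> 'a) \<Rightarrow> complex set" where
  "numrange D A = {cinner x (A x) | x. x \<in> D \<and> norm x = 1}"

definition numrange_cl_ext :: "'a::complex_inner set \<Rightarrow> ('a \<Rightarrow> 'a) \<Rightarrow> ereal set" where
  "numrange_cl_ext D A = closure (ereal ` Re ` numrange D A)"

definition numrange_cl_real :: "('a::complex_inner \<Rightarrow> 'a) \<Rightarrow> real set" where
  "numrange_cl_real B = {\<beta>. complex_of_real \<beta> \<in> closure (numrange UNIV B)}"

definition theta :: "real \<Rightarrow> real \<Rightarrow> complex" where
  "theta c d = csqrt (complex_of_real (c - d\<^sup>2 / 4))"

definition delta_p :: "real \<Rightarrow> real \<Rightarrow> complex" where
  "delta_p c d = theta c d - \<i> * complex_of_real (d / 2)"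

definition delta_m :: "real \<Rightarrow> real \<Rightarrow> complex" where
  "delta_m c d = - theta c d - \<i> * complex_of_real (d / 2)"

definition calC :: "real \<Rightarrow> real \<Rightarrow> complex set" where
  "calC c d = UNIV - {delta_p c d, delta_m c d}"

definition t_fun :: "real \<Rightarrow> real \<Rightarrow> real \<Rightarrow> real \<Rightarrow> complex \<Rightarrow> complex" where
  "t_fun c d \<alpha> \<beta> \<omega> = complex_of_real \<alpha> - \<omega>\<^sup>2
     - \<omega>\<^sup>2 / (complex_of_real c - \<i> * complex_of_real d * \<omega> - \<omega>\<^sup>2) * complex_of_real \<beta>"

definition p_fun :: "real \<Rightarrow> real \<Rightarrow> real \<Rightarrow> real \<Rightarrow> complex \<Rightarrow> complex" where
  "p_fun c d \<alpha> \<beta> \<omega> = (complex_of_real \<alpha> - \<omega>\<^sup>2) * (complex_of_real c - \<i> * complex_of_real d * \<omega> - \<omega>\<^sup>2)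
     - complex_of_real \<beta> * \<omega>\<^sup>2"

text \<open>The finite values r_n(a,beta), n=1..4. For finite a these are the roots of p_(a,beta);
  for a = +/-infinity they are the (finite) limit values of the root branches as alpha tends
  to a, i.e. the limits of roots of p_(alpha_k,beta) along sequences alpha_k tending to a.
  The value infinity in the extended complex plane is not recorded.\<close>
definition roots_ext :: "real \<Rightarrow> real \<Rightarrow> ereal \<Rightarrow> real \<Rightarrow> complex set" where
  "roots_ext c d a \<beta> =
     (case a of
        ereal \<alpha> \<Rightarrow> {\<omega>. p_fun c d \<alpha> \<beta> \<omega> = 0}
      | _ \<Rightarrow> {z. \<exists>\<alpha>s \<omega>s. (\<lambda>k. ereal (\<alpha>s k)) \<longlonglongrightarrow> a \<and>
                 (\<forall>k. p_fun c d (\<alpha>s k) \<beta> (\<omega>s k) = 0) \<and> \<omega>s \<longlonglongrightarrow> z})"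

text \<open>W_Omega(T) intersected with the complex plane.\<close>
definition W_Omega :: "real \<Rightarrow> real \<Rightarrow> (ereal \<times> real) set \<Rightarrow> complex set" where
  "W_Omega c d \<Omega> = (\<Union>(a, \<beta>)\<in>\<Omega>. roots_ext c d a \<beta>)"

text \<open>Enclosure of the epsilon-pseudonumerical range; t_(alpha,beta) is only meaningful
  for finite alpha.\<close>
definition W_Omega_eps :: "real \<Rightarrow> real \<Rightarrow> (ereal \<times> real) set \<Rightarrow> real \<Rightarrow> complex set" where
  "W_Omega_eps c d \<Omega> \<epsilon> = W_Omega c d \<Omega> \<union>
     {\<omega> \<in> calC c d - W_Omega c d \<Omega>. \<exists>\<alpha> \<beta>. (ereal \<alpha>, \<beta>) \<in> \<Omega> \<and> norm (t_fun c d \<alpha> \<beta> \<omega>) < \<epsilon>}"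

end

theory Submission
  imports Defs "HOL-Complex_Analysis.Complex_Analysis"
begin

lemma ci_add_right: "cinner x (y + z) = cinner x y + cinner (x::'a::complex_inner) z"
  by (metis cinner_conj cinner_add_left complex_cnj_add)

lemma ci_scaleC_right: "cinner x (scaleC r y) = r * cinner (x::'a::complex_inner) y"
  by (metis cinner_conj cinner_scaleC_left complex_cnj_mult complex_cnj_cnj)

lemma ci_scaleR_left: "cinner (scaleR r x) y = complex_of_real r * cinner (x::'a::complex_inner) y"
  by (simp add: scaleR_scaleC cinner_scaleC_left)

lemma ci_scaleR_right: "cinner x (scaleR r y) = complex_of_real r * cinner (x::'a::complex_inner) y"
  by (simp add: scaleR_scaleC ci_scaleC_right)

lemma ci_zero_left[simp]: "cinner 0 (y::'a::complex_inner) = 0"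
  using ci_scaleR_left[of 0 0 y] by simp

lemma ci_neg_left: "cinner (-x) (y::'a::complex_inner) = - cinner x y"
  using ci_scaleR_left[of "-1" x y] by simp

lemma ci_neg_right: "cinner x (-y) = - cinner (x::'a::complex_inner) y"
  using ci_scaleR_right[of x "-1" y] by simp

lemma ci_diff_left: "cinner (x - z) (y::'a::complex_inner) = cinner x y - cinner z y"
  using cinner_add_left[of x "-z" y] ci_neg_left[of z y] by simp

lemma norm_sq_ci: "(norm (x::'a::complex_inner))^2 = Re (cinner x x)"
  using norm_eq_sqrt_cinner[of x] cinner_real_nonneg[of x] by simp

lemma Re_ci_sym: "Re (cinner y x) = Re (cinner x (y::'a::complex_inner))"
  by (subst cinner_conj) simp

lemma Re_ci_bound: "\<bar>Re (cinner x y)\<bar> \<le> norm x * norm (y::'a::complex_inner)"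
proof -
  have e1: "(norm (x+y))^2 = (norm x)^2 + (norm y)^2 + 2 * Re (cinner x y)"
    unfolding norm_sq_ci by (simp add: cinner_add_left ci_add_right Re_ci_sym[of y x])
  have e2: "(norm (x-y))^2 = (norm x)^2 + (norm y)^2 - 2 * Re (cinner x y)"
    unfolding norm_sq_ci by (simp add: ci_diff_left cinner_add_left ci_add_right Re_ci_sym[of y x]
       ci_neg_left ci_neg_right diff_conv_add_uminus del: add_uminus_conv_diff) 
  have "norm (x+y) \<le> norm x + norm y" by (rule norm_triangle_ineq)
  hence a: "(norm (x+y))^2 \<le> (norm x + norm y)^2" by (simp add: power_mono)
  have "norm (x-y) \<le> norm x + norm y" by (rule norm_triangle_ineq4)
  hence b: "(norm (x-y))^2 \<le> (norm x + norm y)^2" by (simp add: power_mono)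
  show ?thesis using a b e1 e2 by (simp add: power2_eq_square algebra_simps abs_le_iff)
qed

lemma clin_facts:
  assumes "clinear_on D A"
  shows "\<And>x y. x \<in> D \<Longrightarrow> y \<in> D \<Longrightarrow> x + y \<in> D"
    and "\<And>x r. x \<in> D \<Longrightarrow> scaleR r x \<in> D"
    and "\<And>x y. x \<in> D \<Longrightarrow> y \<in> D \<Longrightarrow> A (x + y) = A x + A y"
    and "\<And>x r. x \<in> D \<Longrightarrow> A (scaleR r x) = scaleR r (A x)"
    and "0 \<in> D"
  using assms unfolding clinear_on_def csubspace_def by (auto simp: scaleR_scaleC)

lemma numrange_convex:
  fixes D :: "'a::complex_inner set"
  assumes lin: "clinear_on D A" and xD: "x\<in>D" and yD: "y\<in>D" and nx: "norm x = 1" and ny: "norm y = 1"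
    and v1: "Re (cinner x (A x)) \<le> v" and v2: "v \<le> Re (cinner y (A y))"
  shows "\<exists>u\<in>D. norm u = 1 \<and> Re (cinner u (A u)) = v"
proof (cases "y = -x")
  case True
  have "A y = - A x" using clin_facts(4)[OF lin xD, of "-1"] True by simp
  hence "Re (cinner y (A y)) = Re (cinner x (A x))" using True by (simp add: ci_neg_left ci_neg_right)
  hence "v = Re (cinner x (A x))" using v1 v2 by simp
  thus ?thesis using xD nx by blast
next
  case False
  define z where "z t = scaleR (1-t) x + scaleR t y" for t
  define r1 where "r1 = Re (cinner x (A x))"
  define r2 where "r2 = Re (cinner y (A y))"
  define m where "m = Re (cinner x (A y)) + Re (cinner y (A x))"
  define m' where "m' = 2 * Re (cinner x y)"
  define N where "N t = (1-t)^2 * r1 + (1-t)*t*m + t^2 * r2" for t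
  define G where "G t = (1-t)^2 + (1-t)*t*m' + t^2" for t
  have zD: "z t \<in> D" for t unfolding z_def using clin_facts[OF lin] xD yD by blast
  have Az: "A (z t) = scaleR (1-t) (A x) + scaleR t (A y)" for t
    unfolding z_def using clin_facts[OF lin] xD yD by simp
  have cx: "Re (cinner x x) = 1" "Re (cinner y y) = 1" using nx ny norm_sq_ci[of x] norm_sq_ci[of y] by auto
  have N: "Re (cinner (z t) (A (z t))) = N t" for t
    unfolding Az unfolding z_def N_def r1_def r2_def m_def
    by (simp only: cinner_add_left ci_add_right ci_scaleR_left ci_scaleR_right) (simp add: power2_eq_square algebra_simps)
  have G: "(norm (z t))^2 = G t" for t
    unfolding norm_sq_ci z_def G_def m'_def using cx Re_ci_sym[of y x]
    by (simp only: cinner_add_left ci_add_right ci_scaleR_left ci_scaleR_right) (simp add: power2_eq_square algebra_simps)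
  have znz: "z t \<noteq> 0" if "0 \<le> t" "t \<le> 1" for t
  proof
    assume z0: "z t = 0"
    hence e: "scaleR (1-t) x = - scaleR t y" unfolding z_def by (simp add: eq_neg_iff_add_eq_0)
    hence "norm (scaleR (1-t) x) = norm (scaleR t y)" by (metis norm_minus_cancel)
    hence "1 - t = t" using nx ny that by simp
    hence "t = 1/2" by simp
    hence "z (1/2) = 0" using z0 by (metis)
    hence "scaleR (1/2) (x + y) = 0" unfolding z_def by (simp add: scaleR_add_right)
    hence "x + y = 0" by simp
    thus False using False by (simp add: eq_neg_iff_add_eq_0 add.commute)
  qed
  have Gpos: "G t > 0" if "0 \<le> t" "t \<le> 1" for t
    using G[of t] znz[OF that] by (metis zero_less_norm_iff zero_less_power)
  have cont: "continuous_on {0..1} (\<lambda>t. N t / G t)"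
    unfolding N_def G_def using Gpos unfolding G_def
    by (intro continuous_intros) (auto simp: less_le)
  have "N 0 / G 0 \<le> v" "v \<le> N 1 / G 1" using v1 v2 unfolding N_def G_def r1_def r2_def by auto
  then obtain t where t: "0 \<le> t" "t \<le> 1" "N t / G t = v"
    using IVT'[of "\<lambda>t. N t / G t" 0 v 1] cont by auto
  define u where "u = scaleR (1 / norm (z t)) (z t)"
  have nz: "norm (z t) > 0" using znz[OF t(1,2)] by simp
  have "u \<in> D" unfolding u_def using clin_facts(2)[OF lin zD] .
  moreover have "norm u = 1" unfolding u_def using nz by simp
  moreover have "Re (cinner u (A u)) = v"
  proof -
    have "Re (cinner u (A u)) = (1 / norm (z t))^2 * Re (cinner (z t) (A (z t)))"
      unfolding u_def using clin_facts(4)[OF lin zD]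
      by (simp add: ci_scaleR_left ci_scaleR_right power2_eq_square)
    also have "\<dots> = N t / G t" using N G[of t] by (simp add: power_divide)
    finally show ?thesis using t by simp
  qed
  ultimately show ?thesis by blast
qed

definition qf :: "real \<Rightarrow> real \<Rightarrow> complex \<Rightarrow> complex" where
  "qf c d \<omega> = complex_of_real c - \<i> * complex_of_real d * \<omega> - \<omega>\<^sup>2"

lemma p_eq: "p_fun c d \<alpha> \<beta> \<omega> = of_real \<alpha> * qf c d \<omega> - \<omega>\<^sup>2 * (qf c d \<omega> + of_real \<beta>)"
  unfolding p_fun_def qf_def by (simp add: algebra_simps)

lemma p_shift: "p_fun c d (\<alpha> - \<tau>) \<beta> \<omega> = p_fun c d \<alpha> \<beta> \<omega> - of_real \<tau> * qf c d \<omega>"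
  unfolding p_eq by (simp add: algebra_simps)

lemma p_t: "qf c d \<omega> \<noteq> 0 \<Longrightarrow> p_fun c d \<alpha> \<beta> \<omega> = t_fun c d \<alpha> \<beta> \<omega> * qf c d \<omega>"
  unfolding p_fun_def t_fun_def qf_def by (simp add: field_simps)

lemma t_g: "qf c d \<omega> \<noteq> 0 \<Longrightarrow> t_fun c d \<alpha> \<beta> \<omega> = of_real \<alpha> - (\<omega>\<^sup>2 + \<omega>\<^sup>2 * of_real \<beta> / qf c d \<omega>)"
  unfolding t_fun_def qf_def by (simp add: field_simps)

lemma q_zero: "qf c d \<omega> = 0 \<longleftrightarrow> \<omega> = delta_p c d \<or> \<omega> = delta_m c d"
proof -
  have th: "(theta c d)^2 = complex_of_real (c - d\<^sup>2/4)" unfolding theta_def by simp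
  have "qf c d \<omega> = - ((\<omega> - delta_p c d) * (\<omega> - delta_m c d))"
    unfolding qf_def delta_p_def delta_m_def
    by (simp add: algebra_simps power2_eq_square th[unfolded power2_eq_square])
  thus ?thesis by simp
qed

lemma calC_q: "\<omega> \<in> calC c d \<longleftrightarrow> qf c d \<omega> \<noteq> 0"
  unfolding calC_def q_zero by auto

lemma cont_qf[continuous_intros]: "continuous_on S (qf c d)"
  unfolding qf_def by (intro continuous_intros)

lemma hol_qf[holomorphic_intros]: "qf c d holomorphic_on S"
  unfolding qf_def by (intro holomorphic_intros)

lemma three_two: "(a::complex) = P \<or> a = M \<Longrightarrow> b = P \<or> b = M \<Longrightarrow> c = P \<or> c = M \<Longrightarrow> a \<noteq> b \<Longrightarrow> a \<noteq> c \<Longrightarrow> b \<noteq> c \<Longrightarrow> False"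
  by auto

lemma q_nonconst:
  assumes "e > 0" "\<And>w. w \<in> ball z e \<Longrightarrow> qf c d w = 0"
  shows False
proof -
  have "qf c d z = 0" "qf c d (z + of_real (e/2)) = 0" "qf c d (z + of_real (e/3)) = 0"
    using assms by (auto simp: dist_norm)
  moreover have "z \<noteq> z + of_real (e/2)" "z \<noteq> z + of_real (e/3)" "z + of_real (e/2) \<noteq> z + of_real (e/3)"
    using assms(1) by auto
  ultimately show False unfolding q_zero by (rule three_two)
qed

lemma roots_inf:
  assumes a: "a = \<infinity> \<or> a = -\<infinity>" and q: "qf c d \<delta> = 0"
  shows "\<delta> \<in> roots_ext c d a \<beta>"
proof -
  define s :: real where "s = (if a = \<infinity> then 1 else -1)"
  have key: "\<exists>R \<omega>. s * R \<ge> real n \<and> dist \<omega> \<delta> < 1 / (real n + 1) \<and> p_fun c d R \<beta> \<omega> = 0" for n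
  proof (cases "\<beta> = 0 \<or> \<delta> = 0")
    case True
    have "p_fun c d (s * real n) \<beta> \<delta> = 0" unfolding p_eq q using True by auto
    moreover have "s * (s * real n) \<ge> real n" unfolding s_def by auto
    ultimately show ?thesis by (intro exI[of _ "s * real n"] exI[of _ \<delta>]) auto
  next
    case False
    define h where "h w = qf c d w / (w\<^sup>2 * (qf c d w + of_real \<beta>))" for w
    define U where "U = {w. w \<noteq> 0 \<and> qf c d w + of_real \<beta> \<noteq> 0}"
    have "open U" unfolding U_def
      by (intro open_Collect_conj open_Collect_neq continuous_intros) 
    moreover have "\<delta> \<in> U" unfolding U_def using False q by auto
    ultimately obtain r0 where r0: "r0 > 0" "ball \<delta> r0 \<subseteq> U" by (meson openE)
    define e where "e = min r0 (1 / (real n + 1))"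
    have e: "e > 0" "ball \<delta> e \<subseteq> U" unfolding e_def using r0 by auto
    have hol: "h holomorphic_on ball \<delta> e" unfolding h_def
      by (intro holomorphic_intros) (use e(2) in \<open>force simp: U_def\<close>)+
    have nc: "\<not> h constant_on ball \<delta> e"
    proof
      assume "h constant_on ball \<delta> e"
      then obtain C where C: "\<And>w. w \<in> ball \<delta> e \<Longrightarrow> h w = C" unfolding constant_on_def by blast
      have "h \<delta> = 0" unfolding h_def q by simp
      hence "C = 0" using C[of \<delta>] e by simp
      hence "qf c d w = 0" if "w \<in> ball \<delta> e" for w
      proof -
        have "w \<in> U" using e(2) that by blast
        hence "w \<noteq> 0" "qf c d w + of_real \<beta> \<noteq> 0" unfolding U_def by auto
        thus ?thesis using C[OF that] \<open>C = 0\<close> unfolding h_def by auto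
      qed
      thus False using q_nonconst[OF e(1)] by blast
    qed
    have "open (h ` ball \<delta> e)"
      by (rule open_mapping_thm[OF hol open_ball connected_ball open_ball order_refl nc])
    moreover have "0 \<in> h ` ball \<delta> e"
    proof -
      have "h \<delta> = 0" unfolding h_def using q by simp
      thus ?thesis using e(1) by (metis centre_in_ball image_eqI)
    qed
    ultimately obtain \<rho> where \<rho>: "\<rho> > 0" "ball 0 \<rho> \<subseteq> h ` ball \<delta> e" by (meson openE)
    define R where "R = s * (real n + 1 + 2 / \<rho>)"
    have s2: "s * s = 1" "\<bar>s\<bar> = 1" unfolding s_def by auto
    have Rpos: "real n + 1 + 2 / \<rho> > 0" using \<rho> by (simp add: add_pos_pos)
    have aR: "\<bar>R\<bar> = real n + 1 + 2 / \<rho>" unfolding R_def using s2 Rpos by (simp add: abs_mult)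
    have "1 / \<rho> < 2 / \<rho>" using \<rho>(1) by (simp add: divide_strict_right_mono)
    hence lt: "1 / \<rho> < real n + 1 + 2 / \<rho>" by linarith
    have "inverse (real n + 1 + 2 / \<rho>) < inverse (1 / \<rho>)"
      by (rule less_imp_inverse_less[OF lt]) (use \<rho>(1) in simp)
    hence "norm (of_real (1 / R) :: complex) < \<rho>"
      unfolding norm_of_real abs_divide aR by (simp add: divide_inverse)
    then obtain \<omega> where \<omega>: "\<omega> \<in> ball \<delta> e" "h \<omega> = of_real (1 / R)" using \<rho>(2) by auto
    have R0: "R \<noteq> 0" unfolding R_def using s2 Rpos by auto
    have "\<omega> \<in> U" using \<omega>(1) e(2) by blast
    hence den: "\<omega>\<^sup>2 * (qf c d \<omega> + of_real \<beta>) \<noteq> 0" unfolding U_def by auto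
    have "p_fun c d R \<beta> \<omega> = 0"
    proof -
      have "qf c d \<omega> = of_real (1/R) * (\<omega>\<^sup>2 * (qf c d \<omega> + of_real \<beta>))"
        using \<omega>(2) den unfolding h_def by (simp add: field_simps)
      thus ?thesis unfolding p_eq using R0 by (simp add: field_simps)
    qed
    moreover have "s * R \<ge> real n" unfolding R_def using s2 \<rho>
      by (simp add: mult.assoc[symmetric]) 
    moreover have "dist \<omega> \<delta> < 1 / (real n + 1)" using \<omega>(1) unfolding e_def by (simp add: dist_commute)
    ultimately show ?thesis by blast
  qed
  then obtain R \<Omega> where R: "\<And>n. s * R n \<ge> real n" "\<And>n. dist (\<Omega> n) \<delta> < 1 / (real n + 1)"
     "\<And>n. p_fun c d (R n) \<beta> (\<Omega> n) = 0"
    by metis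
  have "(\<lambda>k. ereal (R k)) \<longlonglongrightarrow> a"
  proof (cases "a = \<infinity>")
    case True
    have Rn: "R n \<ge> real n" for n using R(1)[of n] True unfolding s_def by simp
    have "eventually (\<lambda>n. ereal r < ereal (R n)) sequentially" for r
    proof -
      obtain N where N: "r < real N" using reals_Archimedean2 by blast
      have "eventually (\<lambda>n. n \<ge> N) sequentially" by simp
      thus ?thesis
      proof (rule eventually_mono)
        fix n assume "n \<ge> N" hence "real n \<ge> real N" by simp
        thus "ereal r < ereal (R n)" using N Rn[of n] by simp
      qed
    qed
    thus ?thesis unfolding True tendsto_PInfty by blast
  next
    case False
    hence a': "a = -\<infinity>" using a by simp
    have Rn: "R n \<le> - real n" for n using R(1)[of n] False unfolding s_def by simp
    have "eventually (\<lambda>n. ereal (R n) < ereal r) sequentially" for r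
    proof -
      obtain N where N: "-r < real N" using reals_Archimedean2 by blast
      have "eventually (\<lambda>n. n \<ge> N) sequentially" by simp
      thus ?thesis
      proof (rule eventually_mono)
        fix n assume "n \<ge> N" hence "real n \<ge> real N" by simp
        thus "ereal (R n) < ereal r" using N Rn[of n] by simp
      qed
    qed
    thus ?thesis unfolding a' tendsto_MInfty by blast
  qed
  moreover have "\<Omega> \<longlonglongrightarrow> \<delta>"
  proof (rule tendstoI)
    fix e :: real assume "e > 0"
    then obtain N where N: "inverse (real (Suc N)) < e" using reals_Archimedean by blast
    have "eventually (\<lambda>n. n \<ge> N) sequentially" by simp
    thus "eventually (\<lambda>n. dist (\<Omega> n) \<delta> < e) sequentially"
    proof (rule eventually_mono)
      fix n assume "n \<ge> N"
      hence "1 / (real n + 1) \<le> inverse (real (Suc N))" by (simp add: field_simps)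
      thus "dist (\<Omega> n) \<delta> < e" using R(2)[of n] N by linarith
    qed
  qed
  ultimately have "\<exists>\<alpha>s \<omega>s. (\<lambda>k. ereal (\<alpha>s k)) \<longlonglongrightarrow> a \<and> (\<forall>k. p_fun c d (\<alpha>s k) \<beta> (\<omega>s k) = 0) \<and> \<omega>s \<longlonglongrightarrow> \<delta>"
    using R(3) by blast
  thus ?thesis unfolding roots_ext_def using a by auto (blast+)
qed

lemma roots_inf_q:
  assumes a: "a = \<infinity> \<or> a = -\<infinity>" and z: "z \<in> roots_ext c d a \<beta>"
  shows "qf c d z = 0"
proof -
  obtain \<alpha>s \<omega>s where A: "(\<lambda>k. ereal (\<alpha>s k)) \<longlonglongrightarrow> a" "\<And>k. p_fun c d (\<alpha>s k) \<beta> (\<omega>s k) = 0" "\<omega>s \<longlonglongrightarrow> z"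
    using z a unfolding roots_ext_def by (auto split: ereal.splits)
  have ev: "eventually (\<lambda>k. \<bar>\<alpha>s k\<bar> > M) sequentially" for M
  proof (cases "a = \<infinity>")
    case True
    hence "\<forall>r. eventually (\<lambda>k. ereal r < ereal (\<alpha>s k)) sequentially" using A(1) tendsto_PInfty by metis
    hence "eventually (\<lambda>k. ereal \<bar>M\<bar> < ereal (\<alpha>s k)) sequentially" by blast
    thus ?thesis by (rule eventually_mono) auto
  next
    case False
    hence "a = -\<infinity>" using a by auto
    hence "\<forall>r. eventually (\<lambda>k. ereal (\<alpha>s k) < ereal r) sequentially" using A(1) tendsto_MInfty by metis
    hence "eventually (\<lambda>k. ereal (\<alpha>s k) < ereal (-\<bar>M\<bar>)) sequentially" by blast
    thus ?thesis by (rule eventually_mono) auto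
  qed
  have inv0: "(\<lambda>k. complex_of_real (1 / \<alpha>s k)) \<longlonglongrightarrow> 0"
  proof (rule tendstoI)
    fix e :: real assume e: "e > 0"
    show "eventually (\<lambda>k. dist (complex_of_real (1 / \<alpha>s k)) 0 < e) sequentially"
      using ev[of "1/e"]
    proof (rule eventually_mono)
      fix k assume k: "\<bar>\<alpha>s k\<bar> > 1/e"
      hence "\<bar>\<alpha>s k\<bar> > 0" using e by (smt (verit) divide_pos_pos)
      hence "1 / \<bar>\<alpha>s k\<bar> < e" using k e by (simp add: field_simps)
      thus "dist (complex_of_real (1 / \<alpha>s k)) 0 < e" by (simp add: dist_norm norm_of_real del: of_real_divide)
    qed
  qed
  have lim1: "(\<lambda>k. complex_of_real (1 / \<alpha>s k) * ((\<omega>s k)\<^sup>2 * (qf c d (\<omega>s k) + of_real \<beta>))) \<longlonglongrightarrow> 0 * (z\<^sup>2 * (qf c d z + of_real \<beta>))"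
    unfolding qf_def by (intro tendsto_intros inv0 A(3))
  have "eventually (\<lambda>k. complex_of_real (1 / \<alpha>s k) * ((\<omega>s k)\<^sup>2 * (qf c d (\<omega>s k) + of_real \<beta>)) = qf c d (\<omega>s k)) sequentially"
    using ev[of 0]
  proof (rule eventually_mono)
    fix k assume "\<bar>\<alpha>s k\<bar> > 0"
    thus "complex_of_real (1 / \<alpha>s k) * ((\<omega>s k)\<^sup>2 * (qf c d (\<omega>s k) + of_real \<beta>)) = qf c d (\<omega>s k)"
      using A(2)[of k] unfolding p_eq by (simp add: field_simps)
  qed
  hence "(\<lambda>k. qf c d (\<omega>s k)) \<longlonglongrightarrow> 0" using lim1 by (simp add: Lim_transform_eventually)
  moreover have "(\<lambda>k. qf c d (\<omega>s k)) \<longlonglongrightarrow> qf c d z"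
    unfolding qf_def by (intro tendsto_intros A(3))
  ultimately show ?thesis using LIMSEQ_unique by metis
qed

lemma approx_t:
  assumes qz: "qf c d z \<noteq> 0" and pz: "p_fun c d \<alpha>' \<beta> z = 0" and ae: "\<bar>\<alpha> - \<alpha>'\<bar> \<le> \<epsilon>"
    and e: "\<epsilon> > 0" and r: "r > 0"
  shows "\<exists>\<omega>. dist \<omega> z < r \<and> qf c d \<omega> \<noteq> 0 \<and> norm (t_fun c d \<alpha> \<beta> \<omega>) < \<epsilon>"
proof -
  define g where "g w = w\<^sup>2 + w\<^sup>2 * of_real \<beta> / qf c d w" for w
  define U where "U = {w. qf c d w \<noteq> 0}"
  have "open U" unfolding U_def by (intro open_Collect_neq continuous_intros)
  moreover have "z \<in> U" using qz unfolding U_def by simp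
  ultimately obtain r0 where r0: "r0 > 0" "ball z r0 \<subseteq> U" by (meson openE)
  define e1 where "e1 = min r r0"
  have e1: "e1 > 0" "ball z e1 \<subseteq> U" "e1 \<le> r" unfolding e1_def using r0 r by auto
  have inU: "qf c d w \<noteq> 0" if "w \<in> ball z e1" for w using e1(2) that unfolding U_def by blast
  have hol: "g holomorphic_on ball z e1" unfolding g_def
    by (intro holomorphic_intros) (simp add: inU)
  have gz: "g z = of_real \<alpha>'"
  proof -
    have "t_fun c d \<alpha>' \<beta> z = 0" using pz p_t[OF qz] qz by simp
    thus ?thesis using t_g[OF qz] unfolding g_def by simp
  qed
  have nc: "\<not> g constant_on ball z e1"
  proof
    assume "g constant_on ball z e1"
    then obtain C where C: "\<And>w. w \<in> ball z e1 \<Longrightarrow> g w = C" unfolding constant_on_def by blast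
    define P where "P = [:C * of_real c, - \<i> * C * of_real d, - (of_real c + C + of_real \<beta>), \<i> * of_real d, 1:]"
    have Pev: "poly P w = (C - w\<^sup>2) * qf c d w - of_real \<beta> * w\<^sup>2" for w
      unfolding P_def qf_def by (simp add: algebra_simps power2_eq_square)
    have "P \<noteq> 0" proof assume "P = 0" hence "coeff P 4 = 0" by simp thus False unfolding P_def by (simp add: numeral_eq_Suc) qed
    hence fin: "finite {w. poly P w = 0}" by (rule poly_roots_finite)
    have "ball z e1 \<subseteq> {w. poly P w = 0}"
    proof
      fix w assume w: "w \<in> ball z e1"
      have "poly P w = qf c d w * (C - g w)" unfolding Pev g_def using inU[OF w] by (simp add: field_simps)
      thus "w \<in> {w. poly P w = 0}" using C[OF w] by simp
    qed
    hence "finite (ball z e1)" using fin finite_subset by blast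
    hence "ball z e1 = {}" using finite_imp_not_open open_ball by blast
    thus False using e1(1) by simp
  qed
  have "open (g ` ball z e1)"
    by (rule open_mapping_thm[OF hol open_ball connected_ball open_ball order_refl nc])
  moreover have "g z \<in> g ` ball z e1" using e1(1) by simp
  ultimately obtain \<rho> where \<rho>: "\<rho> > 0" "ball (g z) \<rho> \<subseteq> g ` ball z e1" by (meson openE)
  define \<tau> where "\<tau> = min 1 (\<rho> / (2 * \<epsilon>))"
  have \<tau>: "\<tau> > 0" "\<tau> \<le> 1" "\<tau> * \<epsilon> \<le> \<rho> / 2" unfolding \<tau>_def using \<rho> e by (auto simp: field_simps min_def)
  define w where "w = \<alpha>' + \<tau> * (\<alpha> - \<alpha>')"
  have "\<bar>w - \<alpha>'\<bar> = \<tau> * \<bar>\<alpha> - \<alpha>'\<bar>" unfolding w_def using \<tau> by (simp add: abs_mult)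
  also have "\<dots> \<le> \<tau> * \<epsilon>" using ae \<tau> by (simp add: mult_left_mono)
  finally have "\<bar>w - \<alpha>'\<bar> < \<rho>" using \<tau> \<rho> by linarith
  hence "of_real w \<in> ball (g z) \<rho>" unfolding gz by (simp add: dist_norm norm_of_real abs_minus_commute del: of_real_diff flip: of_real_diff)
  then obtain \<omega> where \<omega>: "\<omega> \<in> ball z e1" "g \<omega> = of_real w" using \<rho>(2) by force
  have "t_fun c d \<alpha> \<beta> \<omega> = of_real (\<alpha> - w)" using t_g[OF inU[OF \<omega>(1)]] \<omega>(2) unfolding g_def by simp
  moreover have "\<bar>\<alpha> - w\<bar> < \<epsilon>"
  proof -
    have "\<alpha> - w = (1 - \<tau>) * (\<alpha> - \<alpha>')" unfolding w_def by (simp add: algebra_simps)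
    hence "\<bar>\<alpha> - w\<bar> = (1 - \<tau>) * \<bar>\<alpha> - \<alpha>'\<bar>" using \<tau> by (simp add: abs_mult)
    also have "\<dots> \<le> (1 - \<tau>) * \<epsilon>" using ae \<tau> by (simp add: mult_left_mono)
    also have "\<dots> < \<epsilon>" using \<tau> e by simp
    finally show ?thesis .
  qed
  ultimately have "norm (t_fun c d \<alpha> \<beta> \<omega>) < \<epsilon>" by (simp add: norm_of_real del: of_real_diff)
  moreover have "dist \<omega> z < r" using \<omega>(1) e1(3) by (simp add: dist_commute)
  ultimately show ?thesis using inU[OF \<omega>(1)] by blast
qed

lemma sa_lin: "selfadjoint D A \<Longrightarrow> clinear_on D A"
  unfolding selfadjoint_def by simp

lemma unit_in_dense:
  fixes D :: "'a::complex_inner set"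
  assumes "clinear_on D A" "closure D = UNIV" "(x::'a) \<noteq> 0"
  shows "\<exists>u\<in>D. norm u = 1"
proof -
  have "\<exists>y\<in>D. y \<noteq> 0"
  proof (rule ccontr)
    assume "\<not> ?thesis" hence "D \<subseteq> {0}" by auto
    hence "closure D \<subseteq> {0}" by (simp add: closure_minimal)
    thus False using assms(2,3) by auto
  qed
  then obtain y where y: "y \<in> D" "y \<noteq> 0" by blast
  have "scaleR (1 / norm y) y \<in> D" using clin_facts(2)[OF assms(1) y(1)] .
  moreover have "norm (scaleR (1 / norm y) y) = 1" using y(2) by simp
  ultimately show ?thesis by blast
qed

lemma R_nonempty:
  fixes D :: "'a::complex_inner set"
  assumes "selfadjoint D A" "(x::'a) \<noteq> 0"
  shows "Re ` numrange D A \<noteq> {}"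
  using unit_in_dense[OF sa_lin[OF assms(1)] _ assms(2)] assms(1) unfolding numrange_def selfadjoint_def
  by auto

lemma R_convex:
  fixes D :: "'a::complex_inner set"
  assumes "selfadjoint D A" "r1 \<in> Re ` numrange D A" "r2 \<in> Re ` numrange D A" "r1 \<le> v" "v \<le> r2"
  shows "v \<in> Re ` numrange D A"
proof -
  obtain x where x: "x \<in> D" "norm x = 1" "r1 = Re (cinner x (A x))" using assms(2) unfolding numrange_def by auto
  obtain y where y: "y \<in> D" "norm y = 1" "r2 = Re (cinner y (A y))" using assms(3) unfolding numrange_def by auto
  obtain u where "u \<in> D" "norm u = 1" "Re (cinner u (A u)) = v"
    using numrange_convex[OF sa_lin[OF assms(1)] x(1) y(1) x(2) y(2)] assms(4,5) x(3) y(3) by auto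
  thus ?thesis unfolding numrange_def by force
qed

lemma ecl_sub:
  fixes X :: "ereal set"
  shows "closure X \<subseteq> {Inf X .. Sup X}"
  by (rule closure_minimal) (auto intro: Inf_lower Sup_upper)

lemma ecl_Inf: "(X::ereal set) \<noteq> {} \<Longrightarrow> Inf X \<in> closure X"
proof -
  assume ne: "X \<noteq> {}"
  have "Inf (closure X) \<in> closure X" by (rule closed_contains_Inf_cl) (use ne in auto)
  moreover have "Inf (closure X) = Inf X"
  proof (rule antisym)
    show "Inf (closure X) \<le> Inf X" by (rule Inf_superset_mono) (rule closure_subset)
    show "Inf X \<le> Inf (closure X)" using ecl_sub[of X] by (auto intro!: Inf_greatest)
  qed
  ultimately show ?thesis by simp
qed

lemma ecl_Sup: "(X::ereal set) \<noteq> {} \<Longrightarrow> Sup X \<in> closure X"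
proof -
  assume ne: "X \<noteq> {}"
  have "Sup (closure X) \<in> closure X" by (rule closed_contains_Sup_cl) (use ne in auto)
  moreover have "Sup (closure X) = Sup X"
  proof (rule antisym)
    show "Sup X \<le> Sup (closure X)" by (rule Sup_subset_mono) (rule closure_subset)
    show "Sup (closure X) \<le> Sup X" using ecl_sub[of X] by (auto intro!: Sup_least)
  qed
  ultimately show ?thesis by simp
qed

lemma clamp:
  fixes R :: "real set"
  assumes ne: "R \<noteq> {}" and conv: "\<And>r1 r2 v. r1 \<in> R \<Longrightarrow> r2 \<in> R \<Longrightarrow> r1 \<le> v \<Longrightarrow> v \<le> r2 \<Longrightarrow> v \<in> R"
    and lo: "Inf (ereal ` R) - ereal \<epsilon> \<le> ereal \<alpha>'" and hi: "ereal \<alpha>' \<le> Sup (ereal ` R) + ereal \<epsilon>"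
    and e: "\<epsilon> \<ge> 0"
  shows "\<exists>\<alpha>. ereal \<alpha> \<in> closure (ereal ` R) \<and> \<bar>\<alpha> - \<alpha>'\<bar> \<le> \<epsilon>"
proof -
  define a where "a = Inf (ereal ` R)"
  define b where "b = Sup (ereal ` R)"
  have neX: "ereal ` R \<noteq> {}" using ne by simp
  have aS: "a \<in> closure (ereal ` R)" unfolding a_def using ecl_Inf[OF neX] .
  have bS: "b \<in> closure (ereal ` R)" unfolding b_def using ecl_Sup[OF neX] .
  have ab: "a \<le> b" unfolding a_def b_def using neX by (metis Inf_lower Sup_upper ex_in_conv order.trans)
  show ?thesis
  proof (cases "ereal \<alpha>' < a")
    case True
    have "a \<noteq> \<infinity>" using lo unfolding a_def[symmetric] by auto
    moreover have "a \<noteq> -\<infinity>" using True by auto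
    ultimately obtain a0 where a0: "a = ereal a0" by (cases a) auto
    have "\<bar>a0 - \<alpha>'\<bar> \<le> \<epsilon>" using lo True unfolding a_def[symmetric] a0 by auto
    thus ?thesis using aS a0 by blast
  next
    case False
    note F1 = False
    show ?thesis
    proof (cases "b < ereal \<alpha>'")
      case True
      have "b \<noteq> -\<infinity>" using hi unfolding b_def[symmetric] by auto
      moreover have "b \<noteq> \<infinity>" using True by auto
      ultimately obtain b0 where b0: "b = ereal b0" by (cases b) auto
      have "\<bar>b0 - \<alpha>'\<bar> \<le> \<epsilon>" using hi True unfolding b_def[symmetric] b0 by auto
      thus ?thesis using bS b0 by blast
    next
      case False
      have "ereal \<alpha>' \<in> closure (ereal ` R)"
      proof (cases "ereal \<alpha>' = a \<or> ereal \<alpha>' = b")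
        case True thus ?thesis using aS bS by auto
      next
        case False
        hence l: "a < ereal \<alpha>'" and u: "ereal \<alpha>' < b" using F1 \<open>\<not> b < ereal \<alpha>'\<close> by auto
        obtain r1 where r1: "r1 \<in> R" "ereal r1 < ereal \<alpha>'" using l unfolding a_def by (auto simp: Inf_less_iff)
        obtain r2 where r2: "r2 \<in> R" "ereal \<alpha>' < ereal r2" using u unfolding b_def by (auto simp: less_Sup_iff)
        have "\<alpha>' \<in> R" using conv[OF r1(1) r2(1)] r1(2) r2(2) by simp
        thus ?thesis by (meson closure_subset image_eqI subsetD)
      qed
      thus ?thesis using e by (intro exI[of _ \<alpha>']) auto
    qed
  qed
qed

lemma WB_props:
  fixes B :: "'a::complex_inner \<Rightarrow> 'a"
  assumes "selfadjoint UNIV B" "bounded_op B" "\<exists>x. B x \<noteq> 0"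
  shows "numrange_cl_real B \<noteq> {}" "closed (numrange_cl_real B)" "\<exists>M. \<forall>\<beta>\<in>numrange_cl_real B. \<bar>\<beta>\<bar> \<le> M"
proof -
  obtain x where x: "B x \<noteq> 0" using assms(3) by blast
  have lin: "clinear_on UNIV B" using sa_lin[OF assms(1)] .
  have "x \<noteq> 0"
  proof
    assume "x = 0"
    hence "B x = B (scaleR 0 x)" by simp
    also have "\<dots> = 0" using clin_facts(4)[OF lin, of x 0] by simp
    finally show False using x by simp
  qed
  then obtain u :: 'a where u: "norm u = 1" using unit_in_dense[OF lin closure_UNIV] by blast
  have "cinner u (B u) = cnj (cinner u (B u))"
    using assms(1) unfolding selfadjoint_def by (metis UNIV_I cinner_conj)
  hence "Im (cinner u (B u)) = 0" by (metis cnj.simps(2) complex.expand neg_equal_zero)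
  hence "complex_of_real (Re (cinner u (B u))) = cinner u (B u)" by (simp add: complex_eq_iff)
  moreover have "cinner u (B u) \<in> numrange UNIV B" unfolding numrange_def using u by auto
  ultimately have "complex_of_real (Re (cinner u (B u))) \<in> closure (numrange UNIV B)"
    using closure_subset by fastforce
  thus "numrange_cl_real B \<noteq> {}" unfolding numrange_cl_real_def by blast
  have "closed (complex_of_real -` closure (numrange UNIV B))"
    by (rule continuous_closed_vimage) (auto intro: continuous_intros)
  moreover have "numrange_cl_real B = complex_of_real -` closure (numrange UNIV B)" unfolding numrange_cl_real_def by auto
  ultimately show "closed (numrange_cl_real B)" by simp
  obtain K where K: "\<And>x. norm (B x) \<le> K * norm x" using assms(2) unfolding bounded_op_def by blast
  have "numrange UNIV B \<subseteq> {w. \<bar>Re w\<bar> \<le> K}"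
  proof
    fix w assume "w \<in> numrange UNIV B"
    then obtain y where y: "norm y = 1" "w = cinner y (B y)" unfolding numrange_def by auto
    have "\<bar>Re w\<bar> \<le> norm y * norm (B y)" using y(2) Re_ci_bound by simp
    also have "\<dots> \<le> K" using K[of y] y(1) by simp
    finally show "w \<in> {w. \<bar>Re w\<bar> \<le> K}" by simp
  qed
  moreover have "closed {w::complex. \<bar>Re w\<bar> \<le> K}" by (intro closed_Collect_le continuous_intros)
  ultimately have "closure (numrange UNIV B) \<subseteq> {w. \<bar>Re w\<bar> \<le> K}" by (rule closure_minimal)
  thus "\<exists>M. \<forall>\<beta>\<in>numrange_cl_real B. \<bar>\<beta>\<bar> \<le> M" unfolding numrange_cl_real_def by force
qed

definition K1 :: "real \<Rightarrow> real \<Rightarrow> ereal set \<Rightarrow> complex set" where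
  "K1 c d S = (if \<infinity> \<in> S \<or> -\<infinity> \<in> S then {z. qf c d z = 0} else {})"

definition K2 :: "real \<Rightarrow> real \<Rightarrow> ereal set \<Rightarrow> real set \<Rightarrow> real \<Rightarrow> complex set" where
  "K2 c d S WB \<epsilon> = {z. \<exists>\<alpha> \<beta>. ereal \<alpha> \<in> S \<and> \<beta> \<in> WB \<and> norm (p_fun c d \<alpha> \<beta> z) \<le> \<epsilon> * norm (qf c d z)}"

lemma step_i: assumes e0: "\<epsilon> \<ge> 0" shows "W_Omega_eps c d (S \<times> WB) \<epsilon> \<subseteq> K1 c d S \<union> K2 c d S WB \<epsilon>"
proof
  fix z assume z: "z \<in> W_Omega_eps c d (S \<times> WB) \<epsilon>"
  show "z \<in> K1 c d S \<union> K2 c d S WB \<epsilon>"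
  proof (cases "z \<in> W_Omega c d (S \<times> WB)")
    case True
    then obtain a' \<beta> where ab: "a' \<in> S" "\<beta> \<in> WB" "z \<in> roots_ext c d a' \<beta>" unfolding W_Omega_def by auto
    show ?thesis
    proof (cases a')
      case (real \<alpha>)
      hence "p_fun c d \<alpha> \<beta> z = 0" using ab(3) unfolding roots_ext_def by simp
      hence "norm (p_fun c d \<alpha> \<beta> z) \<le> \<epsilon> * norm (qf c d z)" using e0 by simp
      hence "z \<in> K2 c d S WB \<epsilon>" using ab real unfolding K2_def by blast
      thus ?thesis by blast
    next
      case PInf
      hence "qf c d z = 0" using roots_inf_q[of a'] ab(3) by auto
      thus ?thesis using ab PInf unfolding K1_def by auto
    next
      case MInf
      hence "qf c d z = 0" using roots_inf_q[of a'] ab(3) by auto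
      thus ?thesis using ab MInf unfolding K1_def by auto
    qed
  next
    case False
    then obtain \<alpha> \<beta> where ab: "z \<in> calC c d" "(ereal \<alpha>, \<beta>) \<in> S \<times> WB" "norm (t_fun c d \<alpha> \<beta> z) < \<epsilon>"
      using z unfolding W_Omega_eps_def by auto
    have q: "qf c d z \<noteq> 0" using ab(1) calC_q by auto
    have "norm (p_fun c d \<alpha> \<beta> z) = norm (t_fun c d \<alpha> \<beta> z) * norm (qf c d z)" using p_t[OF q] by (simp add: norm_mult)
    also have "\<dots> \<le> \<epsilon> * norm (qf c d z)" using ab(3) by (simp add: mult_right_mono)
    finally show ?thesis using ab(2) unfolding K2_def by auto
  qed
qed

lemma p_tendsto:
  assumes "a \<longlonglongrightarrow> (\<alpha>::real)" "b \<longlonglongrightarrow> (\<beta>::real)" "w \<longlonglongrightarrow> (z::complex)"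
  shows "(\<lambda>n. p_fun c d (a n) (b n) (w n)) \<longlonglongrightarrow> p_fun c d \<alpha> \<beta> z"
  unfolding p_fun_def by (intro tendsto_intros assms)

lemma q_tendsto:
  assumes "w \<longlonglongrightarrow> (z::complex)"
  shows "(\<lambda>n. qf c d (w n)) \<longlonglongrightarrow> qf c d z"
  unfolding qf_def by (intro tendsto_intros assms)

lemma alpha_bound:
  assumes p: "norm (p_fun c d \<alpha> \<beta> w) \<le> \<epsilon> * norm (qf c d w)" and bM: "\<bar>\<beta>\<bar> \<le> M"
    and q2: "norm (qf c d w) \<ge> Q" and Q: "Q > 0" and wZ: "norm w \<le> Z" and e: "\<epsilon> \<ge> 0"
  shows "\<bar>\<alpha>\<bar> \<le> \<epsilon> + Z^2 + Z^2 * M / Q"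
proof -
  let ?q = "norm (qf c d w)"
  have "of_real \<alpha> * qf c d w = p_fun c d \<alpha> \<beta> w + w\<^sup>2 * (qf c d w + of_real \<beta>)" unfolding p_eq by simp
  hence "\<bar>\<alpha>\<bar> * ?q \<le> norm (p_fun c d \<alpha> \<beta> w) + norm (w\<^sup>2 * (qf c d w + of_real \<beta>))"
    by (metis norm_mult norm_of_real norm_triangle_ineq)
  also have "norm (w\<^sup>2 * (qf c d w + of_real \<beta>)) \<le> (norm w)^2 * (?q + \<bar>\<beta>\<bar>)"
  proof -
    have "norm (qf c d w + of_real \<beta>) \<le> ?q + \<bar>\<beta>\<bar>" using norm_triangle_ineq[of "qf c d w" "of_real \<beta>"] by simp
    thus ?thesis by (simp add: norm_mult norm_power mult_left_mono)
  qed
  also have "(norm w)^2 * (?q + \<bar>\<beta>\<bar>) \<le> Z^2 * (?q + M)"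
    using wZ bM by (intro mult_mono power_mono) auto
  finally have "\<bar>\<alpha>\<bar> * ?q \<le> \<epsilon> * ?q + Z^2 * ?q + Z^2 * M" using p by (simp add: algebra_simps)
  hence "(\<bar>\<alpha>\<bar> - \<epsilon> - Z^2) * ?q \<le> Z^2 * M" by (simp add: algebra_simps)
  moreover have "M \<ge> 0" using bM by simp
  ultimately have "(\<bar>\<alpha>\<bar> - \<epsilon> - Z^2) * Q \<le> Z^2 * M"
  proof (cases "\<bar>\<alpha>\<bar> - \<epsilon> - Z^2 \<ge> 0")
    case True
    have "(\<bar>\<alpha>\<bar> - \<epsilon> - Z^2) * Q \<le> (\<bar>\<alpha>\<bar> - \<epsilon> - Z^2) * ?q" using mult_left_mono[OF q2 True] .
    thus ?thesis using \<open>(\<bar>\<alpha>\<bar> - \<epsilon> - Z^2) * ?q \<le> Z^2 * M\<close> by linarith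
  next
    case False
    hence "(\<bar>\<alpha>\<bar> - \<epsilon> - Z^2) * Q \<le> 0" using Q by (simp add: mult_nonpos_nonneg)
    moreover have "Z^2 * M \<ge> 0" using \<open>M \<ge> 0\<close> by simp
    ultimately show ?thesis by linarith
  qed
  hence "\<bar>\<alpha>\<bar> - \<epsilon> - Z^2 \<le> Z^2 * M / Q" using Q by (simp add: field_simps)
  thus ?thesis by simp
qed

lemma closure_K2:
  assumes cS: "closed S" and Sab: "S \<subseteq> {a..b}" and aS: "a \<in> S" and bS: "b \<in> S"
    and cW: "closed WB" and bW: "\<forall>\<beta>\<in>WB. \<bar>\<beta>\<bar> \<le> M" and e: "\<epsilon> \<ge> 0"
  shows "closure (K2 c d S WB \<epsilon>) \<subseteq> K1 c d S \<union> K2 c d S WB \<epsilon>"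
proof
  fix z assume "z \<in> closure (K2 c d S WB \<epsilon>)"
  then obtain zs where zs: "\<And>n. zs n \<in> K2 c d S WB \<epsilon>" "zs \<longlonglongrightarrow> z" unfolding closure_sequential by blast
  have "\<forall>n. \<exists>\<alpha> \<beta>. ereal \<alpha> \<in> S \<and> \<beta> \<in> WB \<and> norm (p_fun c d \<alpha> \<beta> (zs n)) \<le> \<epsilon> * norm (qf c d (zs n))"
    using zs(1) unfolding K2_def by blast
  then obtain \<alpha>s \<beta>s where A: "\<And>n. ereal (\<alpha>s n) \<in> S" "\<And>n. \<beta>s n \<in> WB"
    "\<And>n. norm (p_fun c d (\<alpha>s n) (\<beta>s n) (zs n)) \<le> \<epsilon> * norm (qf c d (zs n))" by metis
  have bdd_case: "z \<in> K2 c d S WB \<epsilon>" if C: "\<And>n. \<bar>\<alpha>s n\<bar> \<le> C" for C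
  proof -
    define f where "f n = (\<alpha>s n, \<beta>s n)" for n
    have "range f \<subseteq> cball 0 C \<times> cball 0 M" unfolding f_def using C A(2) bW by (auto simp: dist_real_def)
    moreover have "bounded (cball (0::real) C \<times> cball (0::real) M)" by (intro bounded_Times bounded_cball)
    ultimately have "bounded (range f)" using bounded_subset by blast
    then obtain l r where lr: "strict_mono r" "(f \<circ> r) \<longlonglongrightarrow> l" using bounded_imp_convergent_subsequence by blast
    have la: "(\<lambda>n. \<alpha>s (r n)) \<longlonglongrightarrow> fst l" using tendsto_fst[OF lr(2)] unfolding f_def by (simp add: o_def)
    have lb: "(\<lambda>n. \<beta>s (r n)) \<longlonglongrightarrow> snd l" using tendsto_snd[OF lr(2)] unfolding f_def by (simp add: o_def)
    have lz: "(\<lambda>n. zs (r n)) \<longlonglongrightarrow> z" using LIMSEQ_subseq_LIMSEQ[OF zs(2) lr(1)] by (simp add: o_def)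
    have "ereal (fst l) \<in> S" using closed_sequentially[OF cS _ tendsto_ereal[OF la]] A(1) by blast
    moreover have "snd l \<in> WB" using closed_sequentially[OF cW _ lb] A(2) by blast
    moreover have "norm (p_fun c d (fst l) (snd l) z) \<le> \<epsilon> * norm (qf c d z)"
      by (rule LIMSEQ_le[OF tendsto_norm[OF p_tendsto[OF la lb lz]] tendsto_mult_left[OF tendsto_norm[OF q_tendsto[OF lz]]]])
        (use A(3) in blast)
    ultimately show ?thesis unfolding K2_def by blast
  qed
  show "z \<in> K1 c d S \<union> K2 c d S WB \<epsilon>"
  proof (cases "\<exists>C. \<forall>n. \<bar>\<alpha>s n\<bar> \<le> C")
    case True thus ?thesis using bdd_case by blast
  next
    case unb: False
    show ?thesis
    proof (cases "qf c d z = 0")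
      case True
      have "\<infinity> \<in> S \<or> -\<infinity> \<in> S"
      proof (rule ccontr)
        assume nn: "\<not> ?thesis"
        have "a \<le> ereal (\<alpha>s 0)" "ereal (\<alpha>s 0) \<le> b" using A(1)[of 0] Sab by auto
        moreover have "b \<noteq> \<infinity>" "a \<noteq> -\<infinity>" using nn aS bS by auto
        ultimately obtain a0 b0 where ab: "a = ereal a0" "b = ereal b0" by (cases a; cases b) auto
        have "\<bar>\<alpha>s n\<bar> \<le> \<bar>a0\<bar> + \<bar>b0\<bar>" for n
        proof -
          have "ereal a0 \<le> ereal (\<alpha>s n)" "ereal (\<alpha>s n) \<le> ereal b0" using A(1)[of n] Sab ab by auto
          thus ?thesis by auto
        qed
        thus False using unb by blast
      qed
      thus ?thesis using True unfolding K1_def by auto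
    next
      case False
      define Q where "Q = norm (qf c d z) / 2"
      define Z where "Z = norm z + 1"
      have Q: "Q > 0" unfolding Q_def using False by simp
      have ev1: "eventually (\<lambda>n. norm (qf c d (zs n)) > Q) sequentially"
        using order_tendstoD(1)[OF tendsto_norm[OF q_tendsto[OF zs(2)]], of Q] Q unfolding Q_def by simp
      have ev2: "eventually (\<lambda>n. norm (zs n) < Z) sequentially"
        using order_tendstoD(2)[OF tendsto_norm[OF zs(2)], of Z] unfolding Z_def by simp
      have "eventually (\<lambda>n. \<bar>\<alpha>s n\<bar> \<le> \<epsilon> + Z^2 + Z^2 * M / Q) sequentially"
        using ev1 ev2
      proof eventually_elim
        case (elim n)
        show ?case by (rule alpha_bound[OF A(3)[of n] _ _ Q _ e]) (use elim bW A(2)[of n] in auto)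
      qed
      then obtain N where N: "\<And>n. n \<ge> N \<Longrightarrow> \<bar>\<alpha>s n\<bar> \<le> \<epsilon> + Z^2 + Z^2 * M / Q"
        unfolding eventually_sequentially by blast
      have "\<bar>\<alpha>s n\<bar> \<le> (\<epsilon> + Z^2 + Z^2 * M / Q) + (\<Sum>i<N. \<bar>\<alpha>s i\<bar>)" for n
      proof (cases "n \<ge> N")
        case True
        have "(\<Sum>i<N. \<bar>\<alpha>s i\<bar>) \<ge> 0" by (simp add: sum_nonneg)
        thus ?thesis using N[OF True] by linarith
      next
        case False
        hence "\<bar>\<alpha>s n\<bar> \<le> (\<Sum>i<N. \<bar>\<alpha>s i\<bar>)" by (intro member_le_sum) auto
        moreover have "\<epsilon> + Z^2 + Z^2 * M / Q \<ge> 0"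
        proof -
          have "M \<ge> 0" using bW A(2)[of 0] by force
          thus ?thesis using e Q by simp
        qed
        ultimately show ?thesis by linarith
      qed
      thus ?thesis using bdd_case by blast
    qed
  qed
qed

lemma in_Se:
  assumes "a \<le> ereal \<alpha>" "ereal \<alpha> \<le> b" "\<bar>\<tau>\<bar> \<le> \<epsilon>"
  shows "ereal (\<alpha> - \<tau>) \<in> {a - ereal \<epsilon> .. b + ereal \<epsilon>}"
  using assms by (cases a; cases b) auto

lemma axis_vals:
  assumes "Re z = 0"
  shows "qf c d z = of_real (c + d * Im z + (Im z)^2)"
    and "p_fun c d \<alpha> \<beta> z = of_real ((\<alpha> + (Im z)^2) * (c + d * Im z + (Im z)^2) + \<beta> * (Im z)^2)"
proof -
  have z: "z = \<i> * of_real (Im z)" using assms by (simp add: complex_eq_iff)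
  show "qf c d z = of_real (c + d * Im z + (Im z)^2)"
    by (subst z) (simp add: qf_def complex_eq_iff power2_eq_square algebra_simps)
  thus "p_fun c d \<alpha> \<beta> z = of_real ((\<alpha> + (Im z)^2) * (c + d * Im z + (Im z)^2) + \<beta> * (Im z)^2)"
    unfolding p_eq by (subst (2 3) z) (simp add: power2_eq_square algebra_simps)
qed

lemma step_iii:
  assumes Sab: "S \<subseteq> {a..b}" and Se: "Se = {a - ereal \<epsilon> .. b + ereal \<epsilon>}" and e: "\<epsilon> \<ge> 0"
    and WB: "\<beta>0 \<in> WB" and z: "z \<in> K1 c d S \<union> K2 c d S WB \<epsilon>" and re: "Re z = 0"
  shows "z \<in> W_Omega c d (Se \<times> WB)"
proof (cases "z \<in> K1 c d S")
  case True
  hence q: "qf c d z = 0" and inf: "\<infinity> \<in> S \<or> -\<infinity> \<in> S" unfolding K1_def by (auto split: if_splits)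
  show ?thesis
  proof (cases "\<infinity> \<in> S")
    case True
    hence "b = \<infinity>" using Sab by auto
    hence "\<infinity> \<in> Se" unfolding Se by auto
    moreover have "z \<in> roots_ext c d \<infinity> \<beta>0" using roots_inf q by blast
    ultimately show ?thesis using WB unfolding W_Omega_def by blast
  next
    case False
    hence "-\<infinity> \<in> S" using inf by blast
    hence "a = -\<infinity>" using Sab by auto
    hence "-\<infinity> \<in> Se" unfolding Se by auto
    moreover have "z \<in> roots_ext c d (-\<infinity>) \<beta>0" using roots_inf q by blast
    ultimately show ?thesis using WB unfolding W_Omega_def by blast
  qed
next
  case False
  then obtain \<alpha> \<beta> where A: "ereal \<alpha> \<in> S" "\<beta> \<in> WB" "norm (p_fun c d \<alpha> \<beta> z) \<le> \<epsilon> * norm (qf c d z)"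
    using z unfolding K2_def by auto
  have ab: "a \<le> ereal \<alpha>" "ereal \<alpha> \<le> b" using A(1) Sab by auto
  show ?thesis
  proof (cases "qf c d z = 0")
    case True
    hence "p_fun c d \<alpha> \<beta> z = 0" using A(3) by simp
    hence "z \<in> roots_ext c d (ereal \<alpha>) \<beta>" unfolding roots_ext_def by simp
    moreover have "ereal (\<alpha> - 0) \<in> Se" unfolding Se by (rule in_Se[OF ab]) (use e in simp)
    ultimately show ?thesis using A(2) unfolding W_Omega_def by force
  next
    case False
    define Qr where "Qr = c + d * Im z + (Im z)^2"
    define Pr where "Pr = (\<alpha> + (Im z)^2) * (c + d * Im z + (Im z)^2) + \<beta> * (Im z)^2"
    have qz: "qf c d z = of_real Qr" and pz: "p_fun c d \<alpha> \<beta> z = of_real Pr"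
      unfolding Qr_def Pr_def using axis_vals[OF re] by auto
    have Q0: "Qr \<noteq> 0" using False qz by simp
    define \<tau> where "\<tau> = Pr / Qr"
    have "\<tau> * Qr = Pr" unfolding \<tau>_def using Q0 by simp
    hence "(of_real \<tau> :: complex) * of_real Qr = of_real Pr" by (metis of_real_mult)
    hence "p_fun c d (\<alpha> - \<tau>) \<beta> z = 0" unfolding p_shift pz qz by simp
    hence "z \<in> roots_ext c d (ereal (\<alpha> - \<tau>)) \<beta>" unfolding roots_ext_def by simp
    moreover have "\<bar>\<tau>\<bar> \<le> \<epsilon>"
    proof -
      have "\<bar>Pr\<bar> \<le> \<epsilon> * \<bar>Qr\<bar>" using A(3) unfolding pz qz by (simp add: norm_of_real)
      thus ?thesis unfolding \<tau>_def using Q0 by (simp add: abs_divide divide_le_eq)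
    qed
    hence "ereal (\<alpha> - \<tau>) \<in> Se" unfolding Se by (rule in_Se[OF ab])
    ultimately show ?thesis using A(2) unfolding W_Omega_def by force
  qed
qed

lemma step_c2:
  fixes R :: "real set"
  assumes ne: "R \<noteq> {}" and conv: "\<And>r1 r2 v. r1 \<in> R \<Longrightarrow> r2 \<in> R \<Longrightarrow> r1 \<le> v \<Longrightarrow> v \<le> r2 \<Longrightarrow> v \<in> R"
    and S: "S = closure (ereal ` R)"
    and Se: "Se = {Inf (ereal ` R) - ereal \<epsilon> .. Sup (ereal ` R) + ereal \<epsilon>}"
    and e: "\<epsilon> > 0" and z: "z \<in> W_Omega c d (Se \<times> WB)"
  shows "z \<in> closure (W_Omega_eps c d (S \<times> WB) \<epsilon>)"
proof -
  have neX: "ereal ` R \<noteq> {}" using ne by simp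
  have aS: "Inf (ereal ` R) \<in> S" unfolding S using ecl_Inf[OF neX] .
  have bS: "Sup (ereal ` R) \<in> S" unfolding S using ecl_Sup[OF neX] .
  have sub: "W_Omega c d (S \<times> WB) \<subseteq> closure (W_Omega_eps c d (S \<times> WB) \<epsilon>)"
    unfolding W_Omega_eps_def using closure_subset by blast
  obtain a' \<beta> where A: "a' \<in> Se" "\<beta> \<in> WB" "z \<in> roots_ext c d a' \<beta>" using z unfolding W_Omega_def by auto
  show ?thesis
  proof (cases a')
    case PInf
    hence "Sup (ereal ` R) = \<infinity>" using A(1) unfolding Se by (cases "Sup (ereal ` R)") auto
    hence "z \<in> W_Omega c d (S \<times> WB)" using A bS PInf unfolding W_Omega_def by force
    thus ?thesis using sub by blast
  next
    case MInf
    hence "Inf (ereal ` R) = -\<infinity>" using A(1) unfolding Se by (cases "Inf (ereal ` R)") auto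
    hence "z \<in> W_Omega c d (S \<times> WB)" using A aS MInf unfolding W_Omega_def by force
    thus ?thesis using sub by blast
  next
    case (real \<alpha>')
    have p': "p_fun c d \<alpha>' \<beta> z = 0" using A(3) real unfolding roots_ext_def by simp
    have lohi: "Inf (ereal ` R) - ereal \<epsilon> \<le> ereal \<alpha>'" "ereal \<alpha>' \<le> Sup (ereal ` R) + ereal \<epsilon>"
      using A(1) real unfolding Se by auto
    obtain \<alpha> where \<alpha>: "ereal \<alpha> \<in> S" "\<bar>\<alpha> - \<alpha>'\<bar> \<le> \<epsilon>"
      using clamp[OF ne conv lohi] e unfolding S by force
    show ?thesis
    proof (cases "qf c d z = 0")
      case True
      have "p_fun c d (\<alpha>' - (\<alpha>' - \<alpha>)) \<beta> z = 0" unfolding p_shift p' True by simp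
      hence "z \<in> roots_ext c d (ereal \<alpha>) \<beta>" unfolding roots_ext_def by simp
      hence "z \<in> W_Omega c d (S \<times> WB)" using \<alpha>(1) A(2) unfolding W_Omega_def by force
      thus ?thesis using sub by blast
    next
      case False
      show ?thesis unfolding closure_approachable
      proof (intro allI impI)
        fix r :: real assume r: "r > 0"
        obtain \<omega> where \<omega>: "dist \<omega> z < r" "qf c d \<omega> \<noteq> 0" "norm (t_fun c d \<alpha> \<beta> \<omega>) < \<epsilon>"
          using approx_t[OF False p' \<alpha>(2) e r] by blast
        have "\<omega> \<in> W_Omega_eps c d (S \<times> WB) \<epsilon>"
          unfolding W_Omega_eps_def using \<omega>(2,3) \<alpha>(1) A(2) calC_q by blast
        thus "\<exists>y\<in>W_Omega_eps c d (S \<times> WB) \<epsilon>. dist y z < r" using \<omega>(1) by blast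
      qed
    qed
  qed
qed

lemma closed_K1: "closed (K1 c d S)"
  unfolding K1_def by (auto intro!: closed_Collect_eq continuous_intros)

theorem proposition4p7:
  fixes DA DAe :: "'h::chilbert_space set"
    and A Ae B :: "'h \<Rightarrow> 'h"
    and c d \<epsilon> :: real
  assumes "selfadjoint DA A"
    and "selfadjoint UNIV B" and "bounded_op B" and "\<exists>x. B x \<noteq> 0"
    and "c \<ge> 0" and "d > 0" and "\<epsilon> > 0"
    and "selfadjoint DAe Ae"
    and "numrange_cl_ext DAe Ae =
           {Inf (ereal ` Re ` numrange DA A) - ereal \<epsilon> .. Sup (ereal ` Re ` numrange DA A) + ereal \<epsilon>}"
  shows "closure (W_Omega_eps c d (numrange_cl_ext DA A \<times> numrange_cl_real B) \<epsilon>) \<inter> {z. Re z = 0}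
       = W_Omega c d (numrange_cl_ext DAe Ae \<times> numrange_cl_real B) \<inter> {z. Re z = 0}"
proof -
  define R where "R = Re ` numrange DA A"
  define S where "S = numrange_cl_ext DA A"
  define Se where "Se = numrange_cl_ext DAe Ae"
  define WB where "WB = numrange_cl_real B"
  define a where "a = Inf (ereal ` R)"
  define b where "b = Sup (ereal ` R)"
  have S: "S = closure (ereal ` R)" unfolding S_def R_def numrange_cl_ext_def by simp
  have Se: "Se = {a - ereal \<epsilon> .. b + ereal \<epsilon>}" unfolding Se_def a_def b_def R_def using assms(9) by simp
  obtain x where x: "B x \<noteq> 0" using assms(4) by blast
  have linB: "clinear_on UNIV B" using sa_lin[OF assms(2)] .
  have x0: "x \<noteq> 0"
  proof
    assume "x = 0"
    hence "B x = B (scaleR 0 x)" by simp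
    also have "\<dots> = 0" using clin_facts(4)[OF linB, of x 0] by simp
    finally show False using x by simp
  qed
  have Rne: "R \<noteq> {}" unfolding R_def by (rule R_nonempty[OF assms(1) x0])
  have conv: "\<And>r1 r2 v. r1 \<in> R \<Longrightarrow> r2 \<in> R \<Longrightarrow> r1 \<le> v \<Longrightarrow> v \<le> r2 \<Longrightarrow> v \<in> R"
    unfolding R_def using R_convex[OF assms(1)] by blast
  note WBp = WB_props[OF assms(2,3,4), folded WB_def]
  obtain \<beta>0 where \<beta>0: "\<beta>0 \<in> WB" using WBp(1) by blast
  obtain M where M: "\<forall>\<beta>\<in>WB. \<bar>\<beta>\<bar> \<le> M" using WBp(3) by blast
  have neX: "ereal ` R \<noteq> {}" using Rne by simp
  have Sab: "S \<subseteq> {a..b}" unfolding S a_def b_def by (rule ecl_sub)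
  have aS: "a \<in> S" unfolding S a_def using ecl_Inf[OF neX] .
  have bS: "b \<in> S" unfolding S b_def using ecl_Sup[OF neX] .
  have cS: "closed S" unfolding S by simp
  have e0: "\<epsilon> \<ge> 0" using assms(7) by simp
  have "closure (W_Omega_eps c d (S \<times> WB) \<epsilon>) \<subseteq> K1 c d S \<union> K2 c d S WB \<epsilon>"
  proof -
    have "closure (W_Omega_eps c d (S \<times> WB) \<epsilon>) \<subseteq> closure (K1 c d S \<union> K2 c d S WB \<epsilon>)"
      by (rule closure_mono[OF step_i[OF e0]])
    also have "\<dots> = K1 c d S \<union> closure (K2 c d S WB \<epsilon>)" by (simp add: closure_Un closed_K1)
    also have "\<dots> \<subseteq> K1 c d S \<union> K2 c d S WB \<epsilon>" using closure_K2[OF cS Sab aS bS WBp(2) M e0] by blast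
    finally show ?thesis .
  qed
  hence "closure (W_Omega_eps c d (S \<times> WB) \<epsilon>) \<inter> {z. Re z = 0} \<subseteq> W_Omega c d (Se \<times> WB) \<inter> {z. Re z = 0}"
    using step_iii[OF Sab Se e0 \<beta>0] by blast
  moreover have "W_Omega c d (Se \<times> WB) \<inter> {z. Re z = 0} \<subseteq> closure (W_Omega_eps c d (S \<times> WB) \<epsilon>) \<inter> {z. Re z = 0}"
  proof
    fix z assume z: "z \<in> W_Omega c d (Se \<times> WB) \<inter> {z. Re z = 0}"
    have "z \<in> closure (W_Omega_eps c d (S \<times> WB) \<epsilon>)"
    proof (rule step_c2[where R = R and Se = Se])
      show "R \<noteq> {}" by (rule Rne)
      show "\<And>r1 r2 v. r1 \<in> R \<Longrightarrow> r2 \<in> R \<Longrightarrow> r1 \<le> v \<Longrightarrow> v \<le> r2 \<Longrightarrow> v \<in> R" by (rule conv)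
      show "S = closure (ereal ` R)" by (rule S)
      show "Se = {Inf (ereal ` R) - ereal \<epsilon>..Sup (ereal ` R) + ereal \<epsilon>}" using Se unfolding a_def b_def .
      show "\<epsilon> > 0" by (rule assms(7))
      show "z \<in> W_Omega c d (Se \<times> WB)" using z by blast
    qed
    thus "z \<in> closure (W_Omega_eps c d (S \<times> WB) \<epsilon>) \<inter> {z. Re z = 0}" using z by blast
  qed
  ultimately show ?thesis unfolding S_def Se_def WB_def by blast
qed

end
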